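(* Let $X=\Delta([a,b])^S$. Then $X$ has the squeezing property, and there is a sequence of unordered pairs $\Sigma_\infty=\{B_i\}_{i\in\mathbf N}$ in $X$ such that $(X,\Sigma_\infty)$ has the countable order property.
   Context: $S$ finite nonempty, $a<b$ reals, $\Delta([a,b])$ the Borel probability measures on $[a,b]$ with the weak topology, $X=\Delta([a,b])^S$ with the product topology. Order on $X$: $f\le g$ iff $g(s)$ first-order stochastically dominates $f(s)$ for every $s$ (i.e. $\int h\,df(s)\le\int h\,dg(s)$ for all bounded continuous nondecreasing $h$). $X$ has the squeezing property if for every sequence $x_n\to x^*$ in $X$ there are an increasing sequence $\{x'_n\}$ and a decreasing sequence $\{x''_n\}$ with $x'_n\le x_n\le x''_n$ and $\lim x'_n=x^*=\lim x''_n$. For a sequence $\Sigma_\infty=\{B_i\}$ of pairs with $B=\bigcup_iB_i$, $(X,\Sigma_\infty)$ has the countable order property if for every $x\in X$ and every neighborhood $V$ of $x$ there are $x',x''\in B\cap V$ with $x'\le x\le x''$. *)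

theory Defs
  imports "HOL-Probability.Probability"
begin

definition Delta :: "real \<Rightarrow> real \<Rightarrow> real measure set" where
  "Delta a b = {M. sets M = sets (restrict_space borel {a..b}) \<and> prob_space M}"

text \<open>Weak topology on Delta a b: the coarsest topology making all maps
  M \<mapsto> integral of h wrt M continuous, h bounded continuous on [a,b]
  (continuity on the compact [a,b] implies boundedness).\<close>
definition weak_top :: "real \<Rightarrow> real \<Rightarrow> real measure topology" where
  "weak_top a b = topology_generated_by
     {{M \<in> Delta a b. (\<integral>x. h x \<partial>M) \<in> U} | (h :: real \<Rightarrow> real) U. continuous_on {a..b} h \<and> open U}"

definition Xtop :: "real \<Rightarrow> real \<Rightarrow> 'i set \<Rightarrow> ('i \<Rightarrow> real measure) topology" where
  "Xtop a b S = product_topology (\<lambda>s. weak_top a b) S"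

definition fosd :: "real \<Rightarrow> real \<Rightarrow> real measure \<Rightarrow> real measure \<Rightarrow> bool" where
  "fosd a b M N \<longleftrightarrow> (\<forall>h :: real \<Rightarrow> real. continuous_on {a..b} h \<and> mono_on {a..b} h
      \<longrightarrow> (\<integral>x. h x \<partial>M) \<le> (\<integral>x. h x \<partial>N))"

definition xle :: "real \<Rightarrow> real \<Rightarrow> 'i set \<Rightarrow> ('i \<Rightarrow> real measure) \<Rightarrow> ('i \<Rightarrow> real measure) \<Rightarrow> bool" where
  "xle a b S f g \<longleftrightarrow> (\<forall>s\<in>S. fosd a b (f s) (g s))"

definition squeezing_property :: "real \<Rightarrow> real \<Rightarrow> 'i set \<Rightarrow> bool" where
  "squeezing_property a b S \<longleftrightarrow>
    (\<forall>x xs. (\<forall>n. xs n \<in> topspace (Xtop a b S)) \<and> x \<in> topspace (Xtop a b S)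
        \<and> limitin (Xtop a b S) xs x sequentially \<longrightarrow>
      (\<exists>xl xu. (\<forall>n. xl n \<in> topspace (Xtop a b S) \<and> xu n \<in> topspace (Xtop a b S))
         \<and> (\<forall>n. xle a b S (xl n) (xl (Suc n)))
         \<and> (\<forall>n. xle a b S (xu (Suc n)) (xu n))
         \<and> (\<forall>n. xle a b S (xl n) (xs n) \<and> xle a b S (xs n) (xu n))
         \<and> limitin (Xtop a b S) xl x sequentially
         \<and> limitin (Xtop a b S) xu x sequentially))"

definition countable_order_property ::
    "real \<Rightarrow> real \<Rightarrow> 'i set \<Rightarrow> (nat \<Rightarrow> ('i \<Rightarrow> real measure) set) \<Rightarrow> bool" where
  "countable_order_property a b S Pairs \<longleftrightarrow>
    (\<forall>x V. x \<in> topspace (Xtop a b S) \<and> openin (Xtop a b S) V \<and> x \<in> V \<longrightarrow>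
       (\<exists>x' x''. x' \<in> (\<Union>i. Pairs i) \<inter> V \<and> x'' \<in> (\<Union>i. Pairs i) \<inter> V
          \<and> xle a b S x' x \<and> xle a b S x x''))"

end

theory Submission
  imports Defs
begin


definition clamp :: "real \<Rightarrow> real \<Rightarrow> real \<Rightarrow> real" where
  "clamp a b x = max a (min b x)"

definition toR :: "real measure \<Rightarrow> real measure" where
  "toR M = distr M borel (\<lambda>x. x)"

definition ofR :: "real \<Rightarrow> real \<Rightarrow> real measure \<Rightarrow> real measure" where
  "ofR a b N = distr N (restrict_space borel {a..b}) (clamp a b)"

lemma Delta_sets: "M \<in> Delta a b \<Longrightarrow> sets M = sets (restrict_space borel {a..b})"
  unfolding Delta_def by auto

lemma Delta_space: "M \<in> Delta a b \<Longrightarrow> space M = {a..b}"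
  using Delta_sets[THEN sets_eq_imp_space_eq] by (simp add: space_restrict_space)

lemma Delta_prob: "M \<in> Delta a b \<Longrightarrow> prob_space M"
  unfolding Delta_def by auto

lemma meas_id_toR: "M \<in> Delta a b \<Longrightarrow> (\<lambda>x. x) \<in> measurable M borel"
  by (subst measurable_cong_sets[OF Delta_sets refl], assumption) 
     (intro measurable_restrict_space1 measurable_ident_sets, simp)

lemma real_distr_toR: "M \<in> Delta a b \<Longrightarrow> real_distribution (toR M)"
  unfolding toR_def
  using prob_space.real_distribution_distr[OF Delta_prob meas_id_toR] by blast

lemma int_toR: fixes g :: "real \<Rightarrow> real" shows "M \<in> Delta a b \<Longrightarrow> g \<in> borel_measurable borel \<Longrightarrow>
   (\<integral>x. g x \<partial>toR M) = (\<integral>x. g x \<partial>M)"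
  unfolding toR_def using integral_distr[OF meas_id_toR[of M a b], of g] by simp

lemma cdf_toR: assumes "M \<in> Delta a b" shows "cdf (toR M) t = measure M ({..t} \<inter> {a..b})"
  unfolding toR_def cdf_def
  by (subst measure_distr[OF meas_id_toR[OF assms]]) (auto simp: Delta_space[OF assms])

lemma clamp_cont: "continuous_on A (clamp a b)"
  unfolding clamp_def by (intro continuous_intros)

lemma clamp_in: "a \<le> b \<Longrightarrow> clamp a b x \<in> {a..b}"
  unfolding clamp_def by auto

lemma clamp_id: "x \<in> {a..b} \<Longrightarrow> clamp a b x = x"
  unfolding clamp_def by auto

lemma clamp_mono: "mono (clamp a b)"
  unfolding clamp_def mono_def by auto

lemma int_clamp: assumes "M \<in> Delta a b"
  shows "(\<integral>x. h x \<partial>M) = (\<integral>x. h (clamp a b x) \<partial>M)"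
  using Bochner_Integration.integral_cong[of M M h "\<lambda>x. h (clamp a b x)"] by (auto simp: Delta_space[OF assms] clamp_id)

lemma quantile_mono_int:
  fixes g :: "real \<Rightarrow> real"
  assumes mu: "real_distribution \<mu>" and nu: "real_distribution \<nu>"
    and le: "\<And>t. cdf \<nu> t \<le> cdf \<mu> t" and g: "mono g" "g \<in> borel_measurable borel"
    and B: "\<And>x. \<bar>g x\<bar> \<le> B"
  shows "(\<integral>x. g x \<partial>\<mu>) \<le> (\<integral>x. g x \<partial>\<nu>)"
proof -
  let ?\<Omega> = "restrict_space lborel {0<..<1::real}"
  interpret A: cdf_distribution \<mu> using mu unfolding cdf_distribution_def .
  interpret B: cdf_distribution \<nu> using nu unfolding cdf_distribution_def .
  let ?Im = "\<lambda>\<omega>. Inf {x. \<omega> \<le> cdf \<mu> x}"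
  let ?In = "\<lambda>\<omega>. Inf {x. \<omega> \<le> cdf \<nu> x}"
  have mIm: "?Im \<in> borel_measurable ?\<Omega>"
    using A.measurable_CI by (subst measurable_cong_sets[of _ "restrict_space borel {0<..<1}"]) (auto simp: sets_restrict_space)
  have mIn: "?In \<in> borel_measurable ?\<Omega>"
    using B.measurable_CI by (subst measurable_cong_sets[of _ "restrict_space borel {0<..<1}"]) (auto simp: sets_restrict_space)
  have igm: "integrable \<mu> g" by (rule A.integrable_const_bound[where B=B]) (use B g in auto)
  have ign: "integrable \<nu> g" by (rule B.integrable_const_bound[where B=B]) (use B g in auto)
  have "(\<integral>x. g x \<partial>\<mu>) = (\<integral>\<omega>. g (?Im \<omega>) \<partial>?\<Omega>)"
    by (subst A.distr_I_eq_M[symmetric]) (rule integral_distr[OF mIm g(2)])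
  also have "\<dots> \<le> (\<integral>\<omega>. g (?In \<omega>) \<partial>?\<Omega>)"
  proof (rule integral_mono)
    show "integrable ?\<Omega> (\<lambda>\<omega>. g (?Im \<omega>))"
      using igm by (subst (asm) A.distr_I_eq_M[symmetric]) (simp add: integrable_distr_eq[OF mIm g(2)])
    show "integrable ?\<Omega> (\<lambda>\<omega>. g (?In \<omega>))"
      using ign by (subst (asm) B.distr_I_eq_M[symmetric]) (simp add: integrable_distr_eq[OF mIn g(2)])
    fix \<omega> assume "\<omega> \<in> space ?\<Omega>"
    then have w: "0 < \<omega>" "\<omega> < 1" by (auto simp: space_restrict_space)
    have "\<omega> \<le> cdf \<nu> (?In \<omega>)" by (rule B.pseudoinverse[OF w, THEN iffD2]) simp
    also have "\<dots> \<le> cdf \<mu> (?In \<omega>)" by (rule le)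
    finally have "?Im \<omega> \<le> ?In \<omega>" by (rule A.pseudoinverse[OF w, THEN iffD1])
    then show "g (?Im \<omega>) \<le> g (?In \<omega>)" by (rule monoD[OF g(1)])
  qed
  also have "\<dots> = (\<integral>x. g x \<partial>\<nu>)"
    by (subst B.distr_I_eq_M[symmetric]) (rule integral_distr[OF mIn g(2), symmetric])
  finally show ?thesis .
qed


lemma topspace_weak: "topspace (weak_top a b) = Delta a b"
  unfolding weak_top_def topology_generated_by_topspace
proof safe
  fix M assume "M \<in> Delta a b"
  then show "M \<in> \<Union>{{M \<in> Delta a b. (\<integral>x. h x \<partial>M) \<in> U} |(h::real\<Rightarrow>real) U. continuous_on {a..b} h \<and> open U}"
    by (intro UnionI[of "{M \<in> Delta a b. (\<integral>x. (\<lambda>x. 0::real) x \<partial>M) \<in> UNIV}"]) auto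
qed

lemma limitin_weakI:
  assumes L: "\<And>n. L n \<in> Delta a b" and M: "M \<in> Delta a b"
    and conv: "\<And>h::real\<Rightarrow>real. continuous_on {a..b} h \<Longrightarrow> (\<lambda>n. \<integral>x. h x \<partial>L n) \<longlonglongrightarrow> (\<integral>x. h x \<partial>M)"
  shows "limitin (weak_top a b) L M sequentially"
  unfolding limitin_def topspace_weak
proof (intro conjI allI impI M)
  fix U assume "openin (weak_top a b) U \<and> M \<in> U"
  then have g: "generate_topology_on {{M \<in> Delta a b. (\<integral>x. h x \<partial>M) \<in> U} |(h::real\<Rightarrow>real) U. continuous_on {a..b} h \<and> open U} U" and "M \<in> U"
    unfolding weak_top_def by (auto dest: openin_topology_generated_by)
  from g \<open>M \<in> U\<close> show "\<forall>\<^sub>F n in sequentially. L n \<in> U"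
  proof (induction arbitrary: rule: generate_topology_on.induct)
    case Empty then show ?case by simp
  next
    case (Int A B) then show ?case by (auto intro: eventually_conj elim: eventually_mono)
  next
    case (UN K)
    then obtain k where "k \<in> K" "M \<in> k" by auto
    with UN have "\<forall>\<^sub>F n in sequentially. L n \<in> k" by auto
    then show ?case using \<open>k \<in> K\<close> by (auto elim: eventually_mono)
  next
    case (Basis s)
    then obtain h :: "real \<Rightarrow> real" and V where s: "s = {M \<in> Delta a b. (\<integral>x. h x \<partial>M) \<in> V}" and h: "continuous_on {a..b} h" and "open V"
      by auto
    with Basis have "(\<integral>x. h x \<partial>M) \<in> V" by auto
    from topological_tendstoD[OF conv[OF h] \<open>open V\<close> this]
    show ?case using L unfolding s by (auto elim: eventually_mono)
  qed
qed

lemma limitin_weakD: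
  fixes h :: "real \<Rightarrow> real"
  assumes lim: "limitin (weak_top a b) L M sequentially" and h: "continuous_on {a..b} h"
  shows "(\<lambda>n. \<integral>x. h x \<partial>L n) \<longlonglongrightarrow> (\<integral>x. h x \<partial>M)"
proof (rule topological_tendstoI)
  fix V assume V: "open V" "(\<integral>x. h x \<partial>M) \<in> V"
  let ?W = "{M \<in> Delta a b. (\<integral>x. h x \<partial>M) \<in> V}"
  have "openin (weak_top a b) ?W"
    unfolding weak_top_def by (intro topology_generated_by_Basis CollectI exI[of _ h] exI[of _ V]) (use h V in simp)
  moreover have "M \<in> ?W" using lim V unfolding limitin_def topspace_weak by auto
  ultimately have "\<forall>\<^sub>F n in sequentially. L n \<in> ?W" using lim unfolding limitin_def by blast
  then show "\<forall>\<^sub>F n in sequentially. (\<integral>x. h x \<partial>L n) \<in> V" by (auto elim: eventually_mono)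
qed

lemma clamp_comp_props:
  fixes h :: "real \<Rightarrow> real"
  assumes h: "continuous_on {a..b} h" and ab: "a \<le> b"
  shows "\<And>x. isCont (\<lambda>x. h (clamp a b x)) x" and "(\<lambda>x. h (clamp a b x)) \<in> borel_measurable borel"
    and "\<exists>B. \<forall>x. \<bar>h (clamp a b x)\<bar> \<le> B"
proof -
  have c: "continuous_on UNIV (\<lambda>x. h (clamp a b x))"
    by (rule continuous_on_compose2[OF h clamp_cont]) (use clamp_in[OF ab] in auto)
  then show "\<And>x. isCont (\<lambda>x. h (clamp a b x)) x"
    by (simp add: continuous_on_eq_continuous_at)
  show "(\<lambda>x. h (clamp a b x)) \<in> borel_measurable borel"
    using c by (rule borel_measurable_continuous_onI)
  have "compact (h ` {a..b})" by (rule compact_continuous_image[OF h]) simp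
  then obtain B where "\<forall>y\<in>h ` {a..b}. norm y \<le> B" using compact_imp_bounded bounded_iff by metis
  then show "\<exists>B. \<forall>x. \<bar>h (clamp a b x)\<bar> \<le> B" using clamp_in[OF ab] by force
qed

lemma weak_conv_limitin:
  assumes L: "\<And>n. L n \<in> Delta a b" and M: "M \<in> Delta a b" and ab: "a \<le> b"
    and wc: "weak_conv_m (\<lambda>n. toR (L n)) (toR M)"
  shows "limitin (weak_top a b) L M sequentially"
proof (rule limitin_weakI[OF L M])
  fix h :: "real \<Rightarrow> real" assume h: "continuous_on {a..b} h"
  note P = clamp_comp_props[OF h ab]
  obtain B where B: "\<And>x. \<bar>h (clamp a b x)\<bar> \<le> B" using P(3) by blast
  have "(\<lambda>n. \<integral>x. h (clamp a b x) \<partial>toR (L n)) \<longlonglongrightarrow> (\<integral>x. h (clamp a b x) \<partial>toR M)"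
    by (rule weak_conv_imp_integral_bdd_continuous_conv[OF real_distr_toR[OF L] real_distr_toR[OF M] wc P(1)])
       (use B in simp)
  then show "(\<lambda>n. \<integral>x. h x \<partial>L n) \<longlonglongrightarrow> (\<integral>x. h x \<partial>M)"
    by (simp add: int_toR[OF L P(2)] int_toR[OF M P(2)] int_clamp[OF L, symmetric] int_clamp[OF M, symmetric])
qed

lemma fosd_cdf:
  assumes M: "M \<in> Delta a b" and N: "N \<in> Delta a b" and ab: "a \<le> b"
    and le: "\<And>t. cdf (toR N) t \<le> cdf (toR M) t"
  shows "fosd a b M N"
  unfolding fosd_def
proof (intro allI impI, elim conjE)
  fix h :: "real \<Rightarrow> real" assume h: "continuous_on {a..b} h" and m: "mono_on {a..b} h"
  note P = clamp_comp_props[OF h ab]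
  obtain B where B: "\<And>x. \<bar>h (clamp a b x)\<bar> \<le> B" using P(3) by blast
  have mono: "mono (\<lambda>x. h (clamp a b x))"
    by (rule monoI, rule mono_onD[OF m]) (auto intro: clamp_in[OF ab] monoD[OF clamp_mono] simp del: atLeastAtMost_iff)
  have "(\<integral>x. h (clamp a b x) \<partial>toR M) \<le> (\<integral>x. h (clamp a b x) \<partial>toR N)"
    by (rule quantile_mono_int[OF real_distr_toR[OF M] real_distr_toR[OF N] le mono P(2) B])
  then show "(\<integral>x. h x \<partial>M) \<le> (\<integral>x. h x \<partial>N)"
    by (simp add: int_toR[OF M P(2)] int_toR[OF N P(2)] int_clamp[OF M, symmetric] int_clamp[OF N, symmetric])
qed


lemma mk_Delta:
  fixes G :: "real \<Rightarrow> real"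
  assumes ab: "a \<le> b" and mono: "\<And>x y. x \<le> y \<Longrightarrow> G x \<le> G y"
    and rc: "\<And>t. continuous (at_right t) G"
    and lo: "\<And>t. t < a \<Longrightarrow> G t = 0" and hi: "\<And>t. b \<le> t \<Longrightarrow> G t = 1"
  shows "ofR a b (interval_measure G) \<in> Delta a b" (is "?N \<in> _")
    and "cdf (toR (ofR a b (interval_measure G))) = G"
proof -
  let ?\<mu> = "interval_measure G"
  have bot: "(G \<longlongrightarrow> 0) at_bot"
    by (rule tendsto_eventually) (auto simp: eventually_at_bot_linorder lo intro!: exI[of _ "a - 1"])
  have top: "(G \<longlongrightarrow> 1) at_top"
    by (rule tendsto_eventually) (auto simp: eventually_at_top_linorder hi intro!: exI[of _ "b"])
  have rd: "real_distribution ?\<mu>"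
    by (rule real_distribution_interval_measure[OF mono rc bot top])
  interpret mu: real_distribution ?\<mu> by (rule rd)
  have mc: "clamp a b \<in> measurable ?\<mu> (restrict_space borel {a..b})"
  proof (rule measurable_restrict_space2)
    show "clamp a b \<in> space ?\<mu> \<rightarrow> {a..b}" using clamp_in[OF ab] by auto
    show "clamp a b \<in> borel_measurable ?\<mu>"
      by (subst measurable_cong_sets[OF mu.events_eq_borel refl]) (rule borel_measurable_continuous_onI[OF clamp_cont])
  qed
  show N: "?N \<in> Delta a b"
    unfolding Delta_def ofR_def using mu.prob_space_distr[OF mc] by simp
  show "cdf (toR ?N) = G"
  proof
    fix t
    have sets: "{..t} \<inter> {a..b} \<in> sets (restrict_space borel {a..b})"
      by (auto simp: sets_restrict_space intro!: image_eqI[of _ _ "{..t}"])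
    have "cdf (toR ?N) t = measure ?N ({..t} \<inter> {a..b})" by (rule cdf_toR[OF N])
    also have "\<dots> = measure ?\<mu> (clamp a b -` ({..t} \<inter> {a..b}))"
      unfolding ofR_def by (subst measure_distr[OF mc sets]) (simp only: mu.space_eq_univ Int_UNIV_right)
    also have "\<dots> = G t"
    proof (cases "t < a")
      case True
      then have "clamp a b -` ({..t} \<inter> {a..b}) = {}" by (auto simp: clamp_def)
      then show ?thesis using True lo by simp
    next
      case False
      show ?thesis
      proof (cases "b \<le> t")
        case True
        then have "clamp a b -` ({..t} \<inter> {a..b}) = space ?\<mu>" using ab by (auto simp: clamp_def)
        then show ?thesis using True hi mu.prob_space by simp
      next
        case F2: False
        then have "clamp a b -` ({..t} \<inter> {a..b}) = {..t}" using False ab by (auto simp: clamp_def)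
        then show ?thesis using measure_interval_measure_Iic[OF mono rc bot] by simp
      qed
    qed
    finally show "cdf (toR ?N) t = G t" .
  qed
qed

lemma Delta_cdf:
  assumes M: "M \<in> Delta a b"
  shows "\<And>x y. x \<le> y \<Longrightarrow> cdf (toR M) x \<le> cdf (toR M) y"
    and "\<And>t. continuous (at_right t) (cdf (toR M))"
    and "\<And>t. t < a \<Longrightarrow> cdf (toR M) t = 0"
    and "\<And>t. b \<le> t \<Longrightarrow> cdf (toR M) t = 1"
    and "\<And>t. 0 \<le> cdf (toR M) t"
    and "\<And>t. cdf (toR M) t \<le> 1"
proof -
  interpret real_distribution "toR M" by (rule real_distr_toR[OF M])
  interpret P: prob_space M by (rule Delta_prob[OF M])
  show "\<And>x y. x \<le> y \<Longrightarrow> cdf (toR M) x \<le> cdf (toR M) y" by (rule cdf_nondecreasing)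
  show "\<And>t. continuous (at_right t) (cdf (toR M))" by (rule cdf_is_right_cont)
  show "\<And>t. 0 \<le> cdf (toR M) t" by (rule cdf_nonneg)
  show "\<And>t. cdf (toR M) t \<le> 1" by (rule cdf_bounded_prob)
  fix t
  show "t < a \<Longrightarrow> cdf (toR M) t = 0" unfolding cdf_toR[OF M] by simp
  assume "b \<le> t"
  then have "{..t} \<inter> {a..b} = space M" using Delta_space[OF M] by auto
  then show "cdf (toR M) t = 1" unfolding cdf_toR[OF M] using P.prob_space by simp
qed



definition gridj :: "real \<Rightarrow> real \<Rightarrow> nat \<Rightarrow> real \<Rightarrow> nat" where
  "gridj a b N t = nat \<lfloor>(t - a) * real N / (b - a)\<rfloor>"

definition gpt :: "real \<Rightarrow> real \<Rightarrow> nat \<Rightarrow> nat \<Rightarrow> real" where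
  "gpt a b N k = a + real k * (b - a) / real N"

definition Gv :: "real \<Rightarrow> real \<Rightarrow> nat \<Rightarrow> (nat \<Rightarrow> real) \<Rightarrow> real \<Rightarrow> real" where
  "Gv a b N v t = (if t < a then 0 else if b \<le> t then 1 else v (gridj a b N t))"

definition stepF :: "real \<Rightarrow> real \<Rightarrow> nat \<Rightarrow> int list \<Rightarrow> real \<Rightarrow> real" where
  "stepF a b N ks t = (if t < a then 0 else if b \<le> t then 1 else real_of_int (ks ! gridj a b N t) / real N)"

lemma gpt_le_iff: assumes "a < b" "0 < N" shows "gpt a b N k \<le> t \<longleftrightarrow> real k \<le> (t - a) * real N / (b - a)"
  using assms by (simp add: gpt_def field_simps)

lemma gpt_less_iff: assumes "a < b" "0 < N" shows "t < gpt a b N k \<longleftrightarrow> (t - a) * real N / (b - a) < real k"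
  using assms by (simp add: gpt_def field_simps)

lemma gridj_props:
  assumes ab: "a < b" and N: "0 < N" and t: "a \<le> t" "t < b"
  shows "gridj a b N t < N" "gpt a b N (gridj a b N t) \<le> t" "t < gpt a b N (Suc (gridj a b N t))"
proof -
  let ?y = "(t - a) * real N / (b - a)"
  have y0: "0 \<le> ?y" using ab t N by simp
  have yN: "?y < real N" using ab t N by (simp add: field_simps)
  have jr: "real (gridj a b N t) = of_int \<lfloor>?y\<rfloor>" unfolding gridj_def using y0 by simp
  have f1: "of_int \<lfloor>?y\<rfloor> \<le> ?y" and f2: "?y < of_int \<lfloor>?y\<rfloor> + 1" using floor_correct[of ?y] by simp_all
  have le: "real (gridj a b N t) \<le> ?y" using jr f1 by linarith
  have lt: "?y < real (Suc (gridj a b N t))" using jr f2 by (simp only: of_nat_Suc)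
  show "gridj a b N t < N" using le yN by linarith
  show "gpt a b N (gridj a b N t) \<le> t" using le gpt_le_iff[OF ab N] by blast
  show "t < gpt a b N (Suc (gridj a b N t))" using lt gpt_less_iff[OF ab N] by blast
qed

lemma gridj_const:
  assumes ab: "a < b" and N: "0 < N" and t: "a \<le> t" "t \<le> s" "s < gpt a b N (Suc (gridj a b N t))"
  shows "gridj a b N s = gridj a b N t"
proof -
  let ?y = "(t - a) * real N / (b - a)" and ?z = "(s - a) * real N / (b - a)"
  have y0: "0 \<le> ?y" using ab t N by simp
  have jr: "real (gridj a b N t) = of_int \<lfloor>?y\<rfloor>" unfolding gridj_def using y0 by simp
  have "?y \<le> ?z" using ab N t by (simp add: divide_right_mono mult_right_mono)
  moreover have "?z < real (Suc (gridj a b N t))" using t(3) gpt_less_iff[OF ab N] by blast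
  ultimately have "\<lfloor>?z\<rfloor> = \<lfloor>?y\<rfloor>" using jr by (simp add: floor_eq_iff) linarith
  then show ?thesis unfolding gridj_def by simp
qed

lemma gridj_mono:
  assumes ab: "a < b" and N: "0 < N" and "t \<le> s"
  shows "gridj a b N t \<le> gridj a b N s"
  unfolding gridj_def using assms
  by (intro nat_mono floor_mono divide_right_mono mult_right_mono) auto

lemma gpt_mono: "a < b \<Longrightarrow> k \<le> k' \<Longrightarrow> gpt a b N k \<le> gpt a b N k'"
  unfolding gpt_def by (intro add_left_mono divide_right_mono mult_right_mono) auto

lemma Gv_props:
  assumes ab: "a < b" and N: "0 < N"
    and vm: "\<And>k k'. k \<le> k' \<Longrightarrow> k' < N \<Longrightarrow> v k \<le> v k'"
    and v01: "\<And>k. k < N \<Longrightarrow> 0 \<le> v k \<and> v k \<le> 1"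
  shows "\<And>x y. x \<le> y \<Longrightarrow> Gv a b N v x \<le> Gv a b N v y"
    and "\<And>t. continuous (at_right t) (Gv a b N v)"
    and "\<And>t. t < a \<Longrightarrow> Gv a b N v t = 0"
    and "\<And>t. b \<le> t \<Longrightarrow> Gv a b N v t = 1"
proof -
  show "\<And>t. t < a \<Longrightarrow> Gv a b N v t = 0" "\<And>t. b \<le> t \<Longrightarrow> Gv a b N v t = 1"
    unfolding Gv_def using ab by auto
  show "Gv a b N v x \<le> Gv a b N v y" if xy: "x \<le> y" for x y
  proof -
    consider "x < a" | "a \<le> x" "x < b" "b \<le> y" | "a \<le> x" "y < b" | "b \<le> x" using xy by linarith
    then show ?thesis
    proof cases
      case 1
      show ?thesis
      proof (cases "y < a")
        case True then show ?thesis using 1 by (simp add: Gv_def)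
      next
        case False
        show ?thesis
        proof (cases "b \<le> y")
          case True then show ?thesis using 1 by (simp add: Gv_def)
        next
          case F2: False
          have "gridj a b N y < N" using gridj_props(1)[OF ab N] False F2 by simp
          then show ?thesis using 1 False F2 v01 by (simp add: Gv_def)
        qed
      qed
    next
      case 2
      have "gridj a b N x < N" using gridj_props(1)[OF ab N] 2 by simp
      then show ?thesis using 2 v01 by (simp add: Gv_def)
    next
      case 3
      have "gridj a b N y < N" using gridj_props(1)[OF ab N] 3 xy by simp
      moreover have "gridj a b N x \<le> gridj a b N y" by (rule gridj_mono[OF ab N xy])
      ultimately show ?thesis using 3 xy vm by (simp add: Gv_def)
    next
      case 4 then show ?thesis using xy by (simp add: Gv_def)
    qed
  qed
  show "continuous (at_right t) (Gv a b N v)" for t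
    unfolding continuous_within
  proof (rule tendsto_eventually)
    consider "t < a" | "a \<le> t" "t < b" | "b \<le> t" by linarith
    then show "\<forall>\<^sub>F s in at_right t. Gv a b N v s = Gv a b N v t"
    proof cases
      case 1
      show ?thesis unfolding eventually_at_right[OF 1]
      proof (intro exI[of _ a] conjI allI impI)
        fix s assume "t < s" "s < a" then show "Gv a b N v s = Gv a b N v t" using 1 by (simp add: Gv_def)
      qed (rule 1)
    next
      case 3
      show ?thesis using eventually_at_right_less[of t]
      proof (rule eventually_mono)
        fix s assume "t < s" then show "Gv a b N v s = Gv a b N v t" using 3 ab by (simp add: Gv_def)
      qed
    next
      case 2
      let ?c = "min b (gpt a b N (Suc (gridj a b N t)))"
      have c: "t < ?c" using 2 gridj_props(3)[OF ab N 2] by simp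
      show ?thesis unfolding eventually_at_right[OF c]
      proof (intro exI[of _ ?c] conjI allI impI)
        fix s assume s: "t < s" "s < ?c"
        have "gridj a b N s = gridj a b N t" by (rule gridj_const[OF ab N 2(1)]) (use s in auto)
        then show "Gv a b N v s = Gv a b N v t" using 2 s by (simp add: Gv_def)
      qed (rule c)
    qed
  qed
qed

lemma stepF_Gv:
  assumes ab: "a < b" and N: "0 < N"
  shows "stepF a b N (map f [0..<N]) = Gv a b N (\<lambda>k. real_of_int (f k) / real N)"
proof
  fix t
  show "stepF a b N (map f [0..<N]) t = Gv a b N (\<lambda>k. real_of_int (f k) / real N) t"
    unfolding stepF_def Gv_def using gridj_props[OF ab N, of t] by auto
qed



definition lowF :: "(real \<Rightarrow> real) \<Rightarrow> real \<Rightarrow> real \<Rightarrow> nat \<Rightarrow> real \<Rightarrow> real" where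
  "lowF F a b N = stepF a b N (map (\<lambda>k. \<lceil>real N * F (gpt a b N (Suc k))\<rceil>) [0..<N])"

definition upF :: "(real \<Rightarrow> real) \<Rightarrow> real \<Rightarrow> real \<Rightarrow> nat \<Rightarrow> real \<Rightarrow> real" where
  "upF F a b N = stepF a b N (map (\<lambda>k. \<lfloor>real N * F (gpt a b N k)\<rfloor>) [0..<N])"

lemma stepF_mid: "a \<le> t \<Longrightarrow> t < b \<Longrightarrow> a < b \<Longrightarrow> 0 < N \<Longrightarrow>
  stepF a b N (map f [0..<N]) t = real_of_int (f (gridj a b N t)) / real N"
  unfolding stepF_def using gridj_props(1)[of a b N t] by simp

lemma c_over_Suc: "(\<lambda>n. t + c / real (Suc n)) \<longlonglongrightarrow> (t::real)"
  using tendsto_add[OF tendsto_const[of t] LIMSEQ_Suc[OF lim_const_over_n[of c]]] by simp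

lemma c_over_Suc': "(\<lambda>n. t - c / real (Suc n)) \<longlonglongrightarrow> (t::real)"
  using tendsto_diff[OF tendsto_const[of t] LIMSEQ_Suc[OF lim_const_over_n[of c]]] by simp

lemma seq_right:
  fixes F :: "real \<Rightarrow> real"
  assumes rc: "continuous (at_right t) F" and u: "\<And>n. t < u n" "\<And>n. u n \<le> t + c / real (Suc n)"
  shows "(\<lambda>n. F (u n)) \<longlonglongrightarrow> F t"
proof -
  have "u \<longlonglongrightarrow> t"
  proof (rule tendsto_sandwich[OF _ _ tendsto_const c_over_Suc[of t c]])
    show "\<forall>\<^sub>F n in sequentially. t \<le> u n" by (rule always_eventually) (use u in \<open>auto intro: less_imp_le\<close>)
    show "\<forall>\<^sub>F n in sequentially. u n \<le> t + c / real (Suc n)" by (rule always_eventually) (use u in auto)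
  qed
  then have "filterlim u (at_right t) sequentially"
    by (rule tendsto_imp_filterlim_at_right) (use u in auto)
  then show ?thesis using rc unfolding continuous_within by (rule filterlim_compose[rotated])
qed

lemma seq_left:
  fixes F :: "real \<Rightarrow> real"
  assumes rc: "isCont F t" and u: "\<And>n. u n \<le> t" "\<And>n. t - c / real (Suc n) \<le> u n"
  shows "(\<lambda>n. F (u n)) \<longlonglongrightarrow> F t"
proof -
  have "u \<longlonglongrightarrow> t"
    by (rule tendsto_sandwich[OF _ _ c_over_Suc'[of t c] tendsto_const]) (use u in auto)
  then show ?thesis using rc by (rule isCont_tendsto_compose[rotated])
qed

lemma gpt_Suc: "gpt a b N (Suc k) = gpt a b N k + (b - a) / real N"
proof -
  have "real (Suc k) * (b - a) / real N = real k * (b - a) / real N + (b - a) / real N"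
    by (simp add: distrib_right add_divide_distrib)
  then show ?thesis by (simp add: gpt_def)
qed

context
  fixes F :: "real \<Rightarrow> real" and a b :: real
  assumes ab: "a < b"
    and Fm: "\<And>x y. x \<le> y \<Longrightarrow> F x \<le> F y" and F0: "\<And>t. 0 \<le> F t" and F1: "\<And>t. F t \<le> 1"
    and Flo: "\<And>t. t < a \<Longrightarrow> F t = 0" and Fhi: "\<And>t. b \<le> t \<Longrightarrow> F t = 1"
begin

lemma lowF_props:
  assumes N: "0 < N"
  shows "\<And>x y. x \<le> y \<Longrightarrow> lowF F a b N x \<le> lowF F a b N y"
    and "\<And>t. continuous (at_right t) (lowF F a b N)"
    and "\<And>t. t < a \<Longrightarrow> lowF F a b N t = 0"
    and "\<And>t. b \<le> t \<Longrightarrow> lowF F a b N t = 1"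
proof -
  let ?v = "\<lambda>k. real_of_int \<lceil>real N * F (gpt a b N (Suc k))\<rceil> / real N"
  have eq: "lowF F a b N = Gv a b N ?v" unfolding lowF_def by (rule stepF_Gv[OF ab N])
  have vm: "?v k \<le> ?v k'" if "k \<le> k'" for k k'
  proof -
    have "F (gpt a b N (Suc k)) \<le> F (gpt a b N (Suc k'))" using that by (intro Fm gpt_mono[OF ab]) simp
    then have "\<lceil>real N * F (gpt a b N (Suc k))\<rceil> \<le> \<lceil>real N * F (gpt a b N (Suc k'))\<rceil>"
      by (intro ceiling_mono mult_left_mono) auto
    then show ?thesis by (intro divide_right_mono) auto
  qed
  have v01: "0 \<le> ?v k \<and> ?v k \<le> 1" for k
  proof -
    have "0 \<le> real N * F (gpt a b N (Suc k))" using F0 by simp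
    then have "0 \<le> \<lceil>real N * F (gpt a b N (Suc k))\<rceil>" by simp
    moreover have "real N * F (gpt a b N (Suc k)) \<le> real N" using F1[of "gpt a b N (Suc k)"] N
      by (simp add: mult_left_le)
    then have "\<lceil>real N * F (gpt a b N (Suc k))\<rceil> \<le> int N" by (simp add: ceiling_le_iff)
    ultimately show ?thesis using N by (simp add: divide_le_eq_1)
  qed
  note G = Gv_props[OF ab N, of ?v, OF vm v01]
  show "\<And>x y. x \<le> y \<Longrightarrow> lowF F a b N x \<le> lowF F a b N y"
    and "\<And>t. continuous (at_right t) (lowF F a b N)"
    and "\<And>t. t < a \<Longrightarrow> lowF F a b N t = 0"
    and "\<And>t. b \<le> t \<Longrightarrow> lowF F a b N t = 1" unfolding eq using G by blast+
qed

lemma upF_props: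
  assumes N: "0 < N"
  shows "\<And>x y. x \<le> y \<Longrightarrow> upF F a b N x \<le> upF F a b N y"
    and "\<And>t. continuous (at_right t) (upF F a b N)"
    and "\<And>t. t < a \<Longrightarrow> upF F a b N t = 0"
    and "\<And>t. b \<le> t \<Longrightarrow> upF F a b N t = 1"
proof -
  let ?v = "\<lambda>k. real_of_int \<lfloor>real N * F (gpt a b N k)\<rfloor> / real N"
  have eq: "upF F a b N = Gv a b N ?v" unfolding upF_def by (rule stepF_Gv[OF ab N])
  have vm: "?v k \<le> ?v k'" if "k \<le> k'" for k k'
  proof -
    have "F (gpt a b N k) \<le> F (gpt a b N k')" using that by (intro Fm gpt_mono[OF ab]) simp
    then have "\<lfloor>real N * F (gpt a b N k)\<rfloor> \<le> \<lfloor>real N * F (gpt a b N k')\<rfloor>"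
      by (intro floor_mono mult_left_mono) auto
    then show ?thesis by (intro divide_right_mono) auto
  qed
  have v01: "0 \<le> ?v k \<and> ?v k \<le> 1" for k
  proof -
    have "0 \<le> real N * F (gpt a b N k)" using F0 by simp
    then have "0 \<le> \<lfloor>real N * F (gpt a b N k)\<rfloor>" by simp
    moreover have "real N * F (gpt a b N k) \<le> real N" using F1[of "gpt a b N k"] N
      by (simp add: mult_left_le)
    then have "\<lfloor>real N * F (gpt a b N k)\<rfloor> \<le> int N" by (simp add: floor_le_iff)
    ultimately show ?thesis using N by (simp add: divide_le_eq_1)
  qed
  note G = Gv_props[OF ab N, of ?v, OF vm v01]
  show "\<And>x y. x \<le> y \<Longrightarrow> upF F a b N x \<le> upF F a b N y"
    and "\<And>t. continuous (at_right t) (upF F a b N)"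
    and "\<And>t. t < a \<Longrightarrow> upF F a b N t = 0"
    and "\<And>t. b \<le> t \<Longrightarrow> upF F a b N t = 1" unfolding eq using G by blast+
qed

lemma lowF_ge:
  assumes N: "0 < N" shows "F t \<le> lowF F a b N t"
proof -
  consider "t < a" | "a \<le> t" "t < b" | "b \<le> t" by linarith
  then show ?thesis
  proof cases
    case 1 then show ?thesis using Flo lowF_props(3)[OF N] by simp
  next
    case 3 then show ?thesis using F1 lowF_props(4)[OF N] by simp
  next
    case 2
    let ?u = "gpt a b N (Suc (gridj a b N t))"
    have "F t \<le> F ?u" using gridj_props(3)[OF ab N 2] by (intro Fm) simp
    also have "\<dots> = real N * F ?u / real N" using N by simp
    also have "\<dots> \<le> real_of_int \<lceil>real N * F ?u\<rceil> / real N"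
      by (intro divide_right_mono) auto
    also have "\<dots> = lowF F a b N t" unfolding lowF_def using stepF_mid[OF 2 ab N] by simp
    finally show ?thesis .
  qed
qed

lemma upF_le:
  assumes N: "0 < N" shows "upF F a b N t \<le> F t"
proof -
  consider "t < a" | "a \<le> t" "t < b" | "b \<le> t" by linarith
  then show ?thesis
  proof cases
    case 1 then show ?thesis using F0 upF_props(3)[OF N] by simp
  next
    case 3 then show ?thesis using Fhi upF_props(4)[OF N] by simp
  next
    case 2
    let ?u = "gpt a b N (gridj a b N t)"
    have "upF F a b N t = real_of_int \<lfloor>real N * F ?u\<rfloor> / real N" unfolding upF_def using stepF_mid[OF 2 ab N] by simp
    also have "\<dots> \<le> real N * F ?u / real N"
      by (intro divide_right_mono) auto
    also have "\<dots> = F ?u" using N by simp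
    also have "\<dots> \<le> F t" using gridj_props(2)[OF ab N 2] by (intro Fm)
    finally show ?thesis .
  qed
qed

lemma lowF_conv:
  assumes rc: "continuous (at_right t) F"
  shows "(\<lambda>n. lowF F a b (Suc n) t) \<longlonglongrightarrow> F t"
proof -
  consider "t < a" | "a \<le> t" "t < b" | "b \<le> t" by linarith
  then show ?thesis
  proof cases
    case 1 then show ?thesis using Flo lowF_props(3)[of "Suc _"] by simp
  next
    case 3 then show ?thesis using Fhi lowF_props(4)[of "Suc _"] by simp
  next
    case 2
    define u where "u n = gpt a b (Suc n) (Suc (gridj a b (Suc n) t))" for n
    have u1: "t < u n" for n unfolding u_def using gridj_props(3)[OF ab _ 2] by simp
    have u2: "u n \<le> t + (b - a) / real (Suc n)" for n
      unfolding u_def gpt_Suc using gridj_props(2)[OF ab _ 2, of "Suc n"] by simp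
    have Fu: "(\<lambda>n. F (u n)) \<longlonglongrightarrow> F t" by (rule seq_right[OF rc u1 u2])
    have eq: "lowF F a b (Suc n) t = real_of_int \<lceil>real (Suc n) * F (u n)\<rceil> / real (Suc n)" for n
      unfolding lowF_def u_def using stepF_mid[OF 2 ab, of "Suc n"] by simp
    have lb: "F (u n) \<le> lowF F a b (Suc n) t" for n
    proof -
      have "F (u n) = real (Suc n) * F (u n) / real (Suc n)" by simp
      also have "\<dots> \<le> real_of_int \<lceil>real (Suc n) * F (u n)\<rceil> / real (Suc n)"
        by (intro divide_right_mono) auto
      finally show ?thesis using eq by simp
    qed
    have ub: "lowF F a b (Suc n) t \<le> F (u n) + 1 / real (Suc n)" for n
    proof -
      have "real_of_int \<lceil>real (Suc n) * F (u n)\<rceil> \<le> real (Suc n) * F (u n) + 1"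
        by linarith
      then have "real_of_int \<lceil>real (Suc n) * F (u n)\<rceil> / real (Suc n) \<le> (real (Suc n) * F (u n) + 1) / real (Suc n)"
        by (intro divide_right_mono) auto
      also have "\<dots> = F (u n) + 1 / real (Suc n)" by (simp add: field_simps)
      finally show ?thesis using eq by simp
    qed
    have "(\<lambda>n. F (u n) + 1 / real (Suc n)) \<longlonglongrightarrow> F t + 0"
      by (intro tendsto_add Fu LIMSEQ_Suc[OF lim_const_over_n])
    then have h: "(\<lambda>n. F (u n) + 1 / real (Suc n)) \<longlonglongrightarrow> F t" by simp
    show ?thesis
      by (rule tendsto_sandwich[OF always_eventually always_eventually Fu h]) (use lb ub in blast)+
  qed
qed

lemma upF_conv:
  assumes ic: "isCont F t"
  shows "(\<lambda>n. upF F a b (Suc n) t) \<longlonglongrightarrow> F t"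
proof -
  consider "t < a" | "a \<le> t" "t < b" | "b \<le> t" by linarith
  then show ?thesis
  proof cases
    case 1 then show ?thesis using Flo upF_props(3)[of "Suc _"] by simp
  next
    case 3 then show ?thesis using Fhi upF_props(4)[of "Suc _"] by simp
  next
    case 2
    define u where "u n = gpt a b (Suc n) (gridj a b (Suc n) t)" for n
    have u1: "u n \<le> t" for n unfolding u_def using gridj_props(2)[OF ab _ 2] by simp
    have u2: "t - (b - a) / real (Suc n) \<le> u n" for n
      using gridj_props(3)[OF ab _ 2, of "Suc n"] unfolding u_def gpt_Suc by simp
    have Fu: "(\<lambda>n. F (u n)) \<longlonglongrightarrow> F t" by (rule seq_left[OF ic u1 u2])
    have eq: "upF F a b (Suc n) t = real_of_int \<lfloor>real (Suc n) * F (u n)\<rfloor> / real (Suc n)" for n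
      unfolding upF_def u_def using stepF_mid[OF 2 ab, of "Suc n"] by simp
    have ub: "upF F a b (Suc n) t \<le> F (u n)" for n
    proof -
      have "real_of_int \<lfloor>real (Suc n) * F (u n)\<rfloor> / real (Suc n) \<le> real (Suc n) * F (u n) / real (Suc n)"
        by (intro divide_right_mono) auto
      then show ?thesis using eq by simp
    qed
    have lb: "F (u n) - 1 / real (Suc n) \<le> upF F a b (Suc n) t" for n
    proof -
      have "real (Suc n) * F (u n) - 1 \<le> real_of_int \<lfloor>real (Suc n) * F (u n)\<rfloor>"
        by linarith
      then have "(real (Suc n) * F (u n) - 1) / real (Suc n) \<le> real_of_int \<lfloor>real (Suc n) * F (u n)\<rfloor> / real (Suc n)"
        by (intro divide_right_mono) auto
      moreover have "(real (Suc n) * F (u n) - 1) / real (Suc n) = F (u n) - 1 / real (Suc n)" by (simp add: field_simps)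
      ultimately show ?thesis using eq by simp
    qed
    have "(\<lambda>n. F (u n) - 1 / real (Suc n)) \<longlonglongrightarrow> F t - 0"
      by (intro tendsto_diff Fu LIMSEQ_Suc[OF lim_const_over_n])
    then have h: "(\<lambda>n. F (u n) - 1 / real (Suc n)) \<longlonglongrightarrow> F t" by simp
    show ?thesis
      by (rule tendsto_sandwich[OF always_eventually always_eventually h Fu]) (use lb ub in blast)+
  qed
qed

end



definition Dset :: "real \<Rightarrow> real \<Rightarrow> real measure set" where
  "Dset a b = (\<lambda>(N, ks). ofR a b (interval_measure (stepF a b N ks))) ` UNIV"

lemma countable_Dset: "countable (Dset a b)"
  unfolding Dset_def by simp

lemma cop1:
  assumes ab: "a < b" and M: "M \<in> Delta a b"
  shows "\<exists>D E. (\<forall>n. D n \<in> Dset a b \<inter> Delta a b \<and> E n \<in> Dset a b \<inter> Delta a b)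
    \<and> (\<forall>n. fosd a b (D n) M \<and> fosd a b M (E n))
    \<and> limitin (weak_top a b) D M sequentially \<and> limitin (weak_top a b) E M sequentially"
proof -
  define F where "F = cdf (toR M)"
  note Fp = Delta_cdf[OF M, folded F_def]
  have ab': "a \<le> b" using ab by simp
  define D where "D n = ofR a b (interval_measure (lowF F a b (Suc n)))" for n
  define E where "E n = ofR a b (interval_measure (upF F a b (Suc n)))" for n
  note LP = lowF_props[OF ab Fp(1) Fp(5) Fp(6) Fp(3) Fp(4)]
  note UP = upF_props[OF ab Fp(1) Fp(5) Fp(6) Fp(3) Fp(4)]
  have Dd: "D n \<in> Delta a b" and cD: "cdf (toR (D n)) = lowF F a b (Suc n)" for n
    unfolding D_def using mk_Delta[OF ab' LP[where N="Suc n"]] by auto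
  have Ed: "E n \<in> Delta a b" and cE: "cdf (toR (E n)) = upF F a b (Suc n)" for n
    unfolding E_def using mk_Delta[OF ab' UP[where N="Suc n"]] by auto
  have DS: "D n \<in> Dset a b" for n
    unfolding Dset_def D_def lowF_def
    by (rule rev_image_eqI[of "(Suc n, map (\<lambda>k. \<lceil>real (Suc n) * F (gpt a b (Suc n) (Suc k))\<rceil>) [0..<Suc n])"]) auto
  have ES: "E n \<in> Dset a b" for n
    unfolding Dset_def E_def upF_def
    by (rule rev_image_eqI[of "(Suc n, map (\<lambda>k. \<lfloor>real (Suc n) * F (gpt a b (Suc n) k)\<rfloor>) [0..<Suc n])"]) auto
  have f1: "fosd a b (D n) M" for n
  proof (rule fosd_cdf[OF Dd M ab'])
    fix t show "cdf (toR M) t \<le> cdf (toR (D n)) t" unfolding cD F_def[symmetric]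
      by (rule lowF_ge[OF ab Fp(1) Fp(5) Fp(6) Fp(3) Fp(4)]) auto
  qed
  have f2: "fosd a b M (E n)" for n
  proof (rule fosd_cdf[OF M Ed ab'])
    fix t show "cdf (toR (E n)) t \<le> cdf (toR M) t" unfolding cE F_def[symmetric]
      by (rule upF_le[OF ab Fp(1) Fp(5) Fp(6) Fp(3) Fp(4)]) auto
  qed
  have l1: "limitin (weak_top a b) D M sequentially"
    by (rule weak_conv_limitin[OF Dd M ab'])
       (unfold weak_conv_m_def weak_conv_def cD F_def[symmetric], intro allI impI lowF_conv[OF ab Fp(1) Fp(5) Fp(6) Fp(3) Fp(4) Fp(2)], auto)
  have l2: "limitin (weak_top a b) E M sequentially"
    by (rule weak_conv_limitin[OF Ed M ab'])
       (unfold weak_conv_m_def weak_conv_def cE F_def[symmetric], intro allI impI upF_conv[OF ab Fp(1) Fp(5) Fp(6) Fp(3) Fp(4)], auto)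
  show ?thesis using Dd Ed DS ES f1 f2 l1 l2 by blast
qed

definition Hlo :: "real \<Rightarrow> real \<Rightarrow> (real \<Rightarrow> real) \<Rightarrow> real \<Rightarrow> real \<Rightarrow> real" where
  "Hlo a b G d t = (if t < a then 0 else if b \<le> t then 1 else min 1 (G (t + d) + d))"

definition Hup :: "real \<Rightarrow> real \<Rightarrow> (real \<Rightarrow> real) \<Rightarrow> real \<Rightarrow> real \<Rightarrow> real" where
  "Hup a b G d t = (if t < a then 0 else if b \<le> t then 1 else max 0 (G (t - d) - d))"

lemma rc_shift:
  fixes G :: "real \<Rightarrow> real"
  assumes "continuous (at_right (t + d)) G"
  shows "((\<lambda>s. G (s + d)) \<longlongrightarrow> G (t + d)) (at_right t)"
proof -
  have "((\<lambda>s. s + d) \<longlongrightarrow> t + d) (at_right t)"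
    by (intro tendsto_intros)
  then have "filterlim (\<lambda>s. s + d) (at_right (t + d)) (at_right t)"
    by (rule tendsto_imp_filterlim_at_right) (use eventually_at_right_less[of t] in \<open>auto elim: eventually_mono\<close>)
  then show ?thesis using assms unfolding continuous_within by (rule filterlim_compose[rotated])
qed

lemma rc_shift':
  fixes G :: "real \<Rightarrow> real"
  assumes "continuous (at_right (t - d)) G"
  shows "((\<lambda>s. G (s - d)) \<longlongrightarrow> G (t - d)) (at_right t)"
  using rc_shift[of t "-d" G] assms by simp

lemma piece_rc:
  fixes f :: "real \<Rightarrow> real"
  assumes ab: "a < b" and f: "\<And>t. a \<le> t \<Longrightarrow> t < b \<Longrightarrow> (f \<longlongrightarrow> f t) (at_right t)"
  shows "continuous (at_right t) (\<lambda>t. if t < a then 0 else if b \<le> t then 1 else f t)"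
  unfolding continuous_within
proof -
  let ?H = "\<lambda>t. if t < a then 0 else if b \<le> t then 1 else f t"
  consider "t < a" | "a \<le> t" "t < b" | "b \<le> t" by linarith
  then show "(?H \<longlongrightarrow> ?H t) (at_right t)"
  proof cases
    case 1
    show ?thesis
    proof (rule tendsto_eventually)
      show "\<forall>\<^sub>F s in at_right t. ?H s = ?H t" unfolding eventually_at_right[OF 1]
      proof (intro exI[of _ a] conjI allI impI)
        fix s assume "t < s" "s < a" then show "?H s = ?H t" using 1 by simp
      qed (rule 1)
    qed
  next
    case 3
    show ?thesis
    proof (rule tendsto_eventually)
      show "\<forall>\<^sub>F s in at_right t. ?H s = ?H t" using eventually_at_right_less[of t]
      proof (rule eventually_mono)
        fix s assume "t < s" then show "?H s = ?H t" using 3 ab by simp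
      qed
    qed
  next
    case 2
    have ev: "\<forall>\<^sub>F s in at_right t. f s = ?H s" unfolding eventually_at_right[OF 2(2)]
    proof (intro exI[of _ b] conjI allI impI)
      fix s assume "t < s" "s < b" then show "f s = ?H s" using 2 by simp
    qed (rule 2(2))
    have "(f \<longlongrightarrow> ?H t) (at_right t)" using f[OF 2] 2 by simp
    then show ?thesis by (rule Lim_transform_eventually[OF _ ev])
  qed
qed

context
  fixes G :: "real \<Rightarrow> real" and a b :: real
  assumes ab: "a < b"
    and Gm: "\<And>x y. x \<le> y \<Longrightarrow> G x \<le> G y" and G0: "\<And>t. 0 \<le> G t" and G1: "\<And>t. G t \<le> 1"
    and Glo: "\<And>t. t < a \<Longrightarrow> G t = 0" and Ghi: "\<And>t. b \<le> t \<Longrightarrow> G t = 1"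
    and Grc: "\<And>t. continuous (at_right t) G"
begin

lemma Hlo_props:
  assumes d: "0 < d"
  shows "\<And>x y. x \<le> y \<Longrightarrow> Hlo a b G d x \<le> Hlo a b G d y"
    and "\<And>t. continuous (at_right t) (Hlo a b G d)"
    and "\<And>t. t < a \<Longrightarrow> Hlo a b G d t = 0"
    and "\<And>t. b \<le> t \<Longrightarrow> Hlo a b G d t = 1"
proof -
  show "\<And>t. t < a \<Longrightarrow> Hlo a b G d t = 0" "\<And>t. b \<le> t \<Longrightarrow> Hlo a b G d t = 1"
    unfolding Hlo_def using ab by auto
  show "Hlo a b G d x \<le> Hlo a b G d y" if xy: "x \<le> y" for x y
  proof -
    have "G (x + d) \<le> G (y + d)" using xy by (intro Gm) simp
    moreover have "0 \<le> G (x + d)" by (rule G0)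
    ultimately show ?thesis using xy d unfolding Hlo_def by auto
  qed
  show "continuous (at_right t) (Hlo a b G d)" for t
  proof -
    have "continuous (at_right t) (\<lambda>t. if t < a then 0 else if b \<le> t then 1 else min 1 (G (t + d) + d))"
      by (rule piece_rc[OF ab]) (intro tendsto_intros rc_shift Grc)
    then show ?thesis unfolding Hlo_def[abs_def] .
  qed
qed

lemma Hup_props:
  assumes d: "0 < d"
  shows "\<And>x y. x \<le> y \<Longrightarrow> Hup a b G d x \<le> Hup a b G d y"
    and "\<And>t. continuous (at_right t) (Hup a b G d)"
    and "\<And>t. t < a \<Longrightarrow> Hup a b G d t = 0"
    and "\<And>t. b \<le> t \<Longrightarrow> Hup a b G d t = 1"
proof -
  show "\<And>t. t < a \<Longrightarrow> Hup a b G d t = 0" "\<And>t. b \<le> t \<Longrightarrow> Hup a b G d t = 1"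
    unfolding Hup_def using ab by auto
  show "Hup a b G d x \<le> Hup a b G d y" if xy: "x \<le> y" for x y
  proof -
    have "G (x - d) \<le> G (y - d)" using xy by (intro Gm) simp
    moreover have "G (x - d) \<le> 1" by (rule G1)
    ultimately show ?thesis using xy d unfolding Hup_def by auto
  qed
  show "continuous (at_right t) (Hup a b G d)" for t
  proof -
    have "continuous (at_right t) (\<lambda>t. if t < a then 0 else if b \<le> t then 1 else max 0 (G (t - d) - d))"
      by (rule piece_rc[OF ab]) (intro tendsto_intros rc_shift' Grc)
    then show ?thesis unfolding Hup_def[abs_def] .
  qed
qed

lemma Hlo_anti: "d' \<le> d \<Longrightarrow> Hlo a b G d' t \<le> Hlo a b G d t"
  unfolding Hlo_def using Gm[of "t + d'" "t + d"] by auto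

lemma Hup_anti: "d' \<le> d \<Longrightarrow> Hup a b G d t \<le> Hup a b G d' t"
  unfolding Hup_def using Gm[of "t - d" "t - d'"] by auto

lemma Hlo_conv:
  assumes dpos: "\<And>n. 0 < dd n" and dlim: "dd \<longlonglongrightarrow> 0"
  shows "(\<lambda>n. Hlo a b G (dd n) t) \<longlonglongrightarrow> G t"
proof -
  consider "t < a" | "a \<le> t" "t < b" | "b \<le> t" by linarith
  then show ?thesis
  proof cases
    case 1 then show ?thesis using Glo by (simp add: Hlo_def)
  next
    case 3 then show ?thesis using Ghi ab by (simp add: Hlo_def)
  next
    case 2
    have "(\<lambda>n. t + dd n) \<longlonglongrightarrow> t + 0" by (intro tendsto_intros dlim)
    then have "filterlim (\<lambda>n. t + dd n) (at_right t) sequentially"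
      by (intro tendsto_imp_filterlim_at_right) (use dpos in auto)
    then have "(\<lambda>n. G (t + dd n)) \<longlonglongrightarrow> G t"
      using Grc[of t] unfolding continuous_within by (rule filterlim_compose[rotated])
    then have "(\<lambda>n. min 1 (G (t + dd n) + dd n)) \<longlonglongrightarrow> min 1 (G t + 0)"
      by (intro tendsto_intros dlim)
    then show ?thesis using 2 G1[of t] by (simp add: Hlo_def)
  qed
qed

lemma Hup_conv:
  assumes dpos: "\<And>n. 0 < dd n" and dlim: "dd \<longlonglongrightarrow> 0" and ic: "isCont G t"
  shows "(\<lambda>n. Hup a b G (dd n) t) \<longlonglongrightarrow> G t"
proof -
  consider "t < a" | "a \<le> t" "t < b" | "b \<le> t" by linarith
  then show ?thesis
  proof cases
    case 1 then show ?thesis using Glo by (simp add: Hup_def)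
  next
    case 3 then show ?thesis using Ghi ab by (simp add: Hup_def)
  next
    case 2
    have "(\<lambda>n. t - dd n) \<longlonglongrightarrow> t - 0" by (intro tendsto_intros dlim)
    then have "(\<lambda>n. G (t - dd n)) \<longlonglongrightarrow> G t"
      using ic by (intro isCont_tendsto_compose[of t G]) simp_all
    then have "(\<lambda>n. max 0 (G (t - dd n) - dd n)) \<longlonglongrightarrow> max 0 (G t - 0)"
      by (intro tendsto_intros dlim)
    then show ?thesis using 2 G0[of t] by (simp add: Hup_def)
  qed
qed

end



lemma levy:
  assumes ab: "a < b" and Ms: "\<And>k. Ms k \<in> Delta a b" and M: "M \<in> Delta a b"
    and lim: "limitin (weak_top a b) Ms M sequentially" and d: "0 < \<delta>"
  shows "\<forall>\<^sub>F k in sequentially. \<forall>t. cdf (toR (Ms k)) t \<le> cdf (toR M) (t + \<delta>) + \<delta>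
            \<and> cdf (toR M) (t - \<delta>) - \<delta> \<le> cdf (toR (Ms k)) t"
proof -
  define \<eta> where "\<eta> = \<delta> / 2"
  have \<eta>: "0 < \<eta>" using d by (simp add: \<eta>_def)
  have cs_cont: "continuous_on {a..b} (cts_step x y)" if "x < y" for x y
    using uniformly_continuous_imp_continuous[OF cts_step_uniformly_continuous[OF that]]
    by (rule continuous_on_subset) simp
  have cs_meas: "cts_step x y \<in> borel_measurable borel" if "x < y" for x y
    using uniformly_continuous_imp_continuous[OF cts_step_uniformly_continuous[OF that]]
    by (rule borel_measurable_continuous_onI)
  have conv: "(\<lambda>k. \<integral>z. cts_step x y z \<partial>toR (Ms k)) \<longlonglongrightarrow> (\<integral>z. cts_step x y z \<partial>toR M)" if "x < y" for x y
    using limitin_weakD[OF lim cs_cont[OF that]]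
    by (simp add: int_toR[OF Ms cs_meas[OF that]] int_toR[OF M cs_meas[OF that]])
  have up: "\<forall>\<^sub>F k in sequentially. cdf (toR (Ms k)) s \<le> cdf (toR M) (s + \<eta>) + \<eta>" for s
  proof -
    have xy: "s < s + \<eta>" using \<eta> by simp
    have "\<forall>\<^sub>F k in sequentially. (\<integral>z. cts_step s (s + \<eta>) z \<partial>toR (Ms k)) < (\<integral>z. cts_step s (s + \<eta>) z \<partial>toR M) + \<eta>"
      by (rule order_tendstoD(2)[OF conv[OF xy]]) (use \<eta> in simp)
    then show ?thesis
    proof (rule eventually_mono)
      fix k assume "(\<integral>z. cts_step s (s + \<eta>) z \<partial>toR (Ms k)) < (\<integral>z. cts_step s (s + \<eta>) z \<partial>toR M) + \<eta>"
      moreover have "cdf (toR (Ms k)) s \<le> (\<integral>z. cts_step s (s + \<eta>) z \<partial>toR (Ms k))"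
        by (rule real_distribution.cdf_cts_step(1)[OF real_distr_toR[OF Ms] xy])
      moreover have "(\<integral>z. cts_step s (s + \<eta>) z \<partial>toR M) \<le> cdf (toR M) (s + \<eta>)"
        by (rule real_distribution.cdf_cts_step(2)[OF real_distr_toR[OF M] xy])
      ultimately show "cdf (toR (Ms k)) s \<le> cdf (toR M) (s + \<eta>) + \<eta>" by linarith
    qed
  qed
  have lo: "\<forall>\<^sub>F k in sequentially. cdf (toR M) (s - \<eta>) - \<eta> \<le> cdf (toR (Ms k)) s" for s
  proof -
    have xy: "s - \<eta> < s" using \<eta> by simp
    have "\<forall>\<^sub>F k in sequentially. (\<integral>z. cts_step (s - \<eta>) s z \<partial>toR M) - \<eta> < (\<integral>z. cts_step (s - \<eta>) s z \<partial>toR (Ms k))"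
      by (rule order_tendstoD(1)[OF conv[OF xy]]) (use \<eta> in simp)
    then show ?thesis
    proof (rule eventually_mono)
      fix k assume "(\<integral>z. cts_step (s - \<eta>) s z \<partial>toR M) - \<eta> < (\<integral>z. cts_step (s - \<eta>) s z \<partial>toR (Ms k))"
      moreover have "(\<integral>z. cts_step (s - \<eta>) s z \<partial>toR (Ms k)) \<le> cdf (toR (Ms k)) s"
        by (rule real_distribution.cdf_cts_step(2)[OF real_distr_toR[OF Ms] xy])
      moreover have "cdf (toR M) (s - \<eta>) \<le> (\<integral>z. cts_step (s - \<eta>) s z \<partial>toR M)"
        by (rule real_distribution.cdf_cts_step(1)[OF real_distr_toR[OF M] xy])
      ultimately show "cdf (toR M) (s - \<eta>) - \<eta> \<le> cdf (toR (Ms k)) s" by linarith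
    qed
  qed
  define N where "N = Suc (nat \<lceil>(b - a) / \<eta>\<rceil>)"
  have N0: "0 < N" unfolding N_def by simp
  have "(b - a) / \<eta> \<le> real N" unfolding N_def using real_nat_ceiling_ge[of "(b - a) / \<eta>"] by simp
  then have hN: "(b - a) / real N \<le> \<eta>" using \<eta> N0 ab by (simp add: field_simps)
  let ?P = "gpt a b N ` {..N}"
  have "\<forall>\<^sub>F k in sequentially. \<forall>p\<in>?P. cdf (toR (Ms k)) p \<le> cdf (toR M) (p + \<eta>) + \<eta>
          \<and> cdf (toR M) (p - \<eta>) - \<eta> \<le> cdf (toR (Ms k)) p"
    by (rule eventually_ball_finite) (auto intro: eventually_conj up lo)
  then show ?thesis
  proof (rule eventually_mono)
    fix k assume H: "\<forall>p\<in>?P. cdf (toR (Ms k)) p \<le> cdf (toR M) (p + \<eta>) + \<eta>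
          \<and> cdf (toR M) (p - \<eta>) - \<eta> \<le> cdf (toR (Ms k)) p"
    let ?F = "cdf (toR (Ms k))" and ?G = "cdf (toR M)"
    have Fm: "x \<le> y \<Longrightarrow> ?F x \<le> ?F y" for x y using Delta_cdf(1)[OF Ms] by blast
    have Gm: "x \<le> y \<Longrightarrow> ?G x \<le> ?G y" for x y using Delta_cdf(1)[OF M] by blast
    have F0: "0 \<le> ?F x" and F1: "?F x \<le> 1" and G0: "0 \<le> ?G x" and G1: "?G x \<le> 1" for x
      using Delta_cdf(5,6)[OF Ms] Delta_cdf(5,6)[OF M] by blast+
    show "\<forall>t. ?F t \<le> ?G (t + \<delta>) + \<delta> \<and> ?G (t - \<delta>) - \<delta> \<le> ?F t"
    proof
      fix t
      consider "t < a" | "a \<le> t" "t < b" | "b \<le> t" by linarith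
      then show "?F t \<le> ?G (t + \<delta>) + \<delta> \<and> ?G (t - \<delta>) - \<delta> \<le> ?F t"
      proof cases
        case 1
        then have "?F t = 0" "?G (t - \<delta>) = 0" using Delta_cdf(3)[OF Ms] Delta_cdf(3)[OF M] d by auto
        then show ?thesis using G0[of "t + \<delta>"] d by simp
      next
        case 3
        then have "?F t = 1" "?G (t + \<delta>) = 1" using Delta_cdf(4)[OF Ms] Delta_cdf(4)[OF M] d by auto
        then show ?thesis using G1[of "t - \<delta>"] d by simp
      next
        case 2
        let ?j = "gridj a b N t"
        have j: "?j < N" "gpt a b N ?j \<le> t" "t < gpt a b N (Suc ?j)"
          using gridj_props[OF ab N0 2] by auto
        have step: "gpt a b N (Suc ?j) \<le> gpt a b N ?j + \<eta>" using hN by (simp add: gpt_Suc)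
        have p1: "gpt a b N ?j \<in> ?P" using j by auto
        have p2: "gpt a b N (Suc ?j) \<in> ?P" using j by auto
        have "?F t \<le> ?F (gpt a b N (Suc ?j))" using j by (intro Fm) simp
        also have "\<dots> \<le> ?G (gpt a b N (Suc ?j) + \<eta>) + \<eta>" using H p2 by blast
        also have "\<dots> \<le> ?G (t + \<delta>) + \<delta>"
        proof -
          have "?G (gpt a b N (Suc ?j) + \<eta>) \<le> ?G (t + \<delta>)"
            by (rule Gm) (use step j in \<open>simp add: \<eta>_def\<close>)
          moreover have "\<eta> \<le> \<delta>" using d by (simp add: \<eta>_def)
          ultimately show ?thesis by linarith
        qed
        finally have A: "?F t \<le> ?G (t + \<delta>) + \<delta>" .
        have "?G (t - \<delta>) - \<delta> \<le> ?G (gpt a b N ?j - \<eta>) - \<eta>"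
        proof -
          have "?G (t - \<delta>) \<le> ?G (gpt a b N ?j - \<eta>)"
            by (rule Gm) (use step j in \<open>simp add: \<eta>_def\<close>)
          moreover have "\<eta> \<le> \<delta>" using d by (simp add: \<eta>_def)
          ultimately show ?thesis by linarith
        qed
        also have "\<dots> \<le> ?F (gpt a b N ?j)" using H p1 by blast
        also have "\<dots> \<le> ?F t" using j by (intro Fm) simp
        finally show ?thesis using A by simp
      qed
    qed
  qed
qed

lemma greatest_seq:
  fixes P :: "nat \<Rightarrow> nat \<Rightarrow> bool"
  assumes P0: "\<And>n. P n 0" and Pmono: "\<And>n m. P n m \<Longrightarrow> P (Suc n) m"
    and Pev: "\<And>m. \<exists>n0. \<forall>n\<ge>n0. P n m"
  shows "\<exists>mm. (\<forall>n. P n (mm n)) \<and> mono mm \<and> (\<forall>m. \<exists>n0. \<forall>n\<ge>n0. m \<le> mm n)"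
proof -
  define mm where "mm n = (GREATEST m. m \<le> n \<and> P n m)" for n
  have G: "mm n \<le> n \<and> P n (mm n)" for n
    unfolding mm_def by (rule GreatestI_nat[of _ 0 n]) (use P0 in auto)
  have Gle: "m \<le> n \<Longrightarrow> P n m \<Longrightarrow> m \<le> mm n" for n m
    unfolding mm_def by (rule Greatest_le_nat[of _ m n]) auto
  have "mono mm" unfolding mono_iff_le_Suc
  proof
    fix n show "mm n \<le> mm (Suc n)" using G[of n] by (intro Gle Pmono) auto
  qed
  moreover have "\<exists>n0. \<forall>n\<ge>n0. m \<le> mm n" for m
  proof -
    obtain n0 where n0: "\<forall>n\<ge>n0. P n m" using Pev by blast
    show ?thesis by (rule exI[of _ "max n0 m"]) (use n0 in \<open>auto intro!: Gle\<close>)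
  qed
  ultimately show ?thesis using G by blast
qed



lemma sqz1:
  assumes ab: "a < b" and Ms: "\<And>k. Ms k \<in> Delta a b" and M: "M \<in> Delta a b"
    and lim: "limitin (weak_top a b) Ms M sequentially"
  shows "\<exists>L U. (\<forall>n. L n \<in> Delta a b \<and> U n \<in> Delta a b) \<and> (\<forall>n. fosd a b (L n) (L (Suc n)))
     \<and> (\<forall>n. fosd a b (U (Suc n)) (U n)) \<and> (\<forall>n. fosd a b (L n) (Ms n) \<and> fosd a b (Ms n) (U n))
     \<and> limitin (weak_top a b) L M sequentially \<and> limitin (weak_top a b) U M sequentially"
proof -
  have ab': "a \<le> b" using ab by simp
  define G where "G = cdf (toR M)"
  note Gp = Delta_cdf[OF M, folded G_def]
  define P where "P n m \<longleftrightarrow> (\<forall>k\<ge>n. \<forall>t. cdf (toR (Ms k)) t \<le> G (t + 1 / (real m + 1)) + 1 / (real m + 1)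
       \<and> G (t - 1 / (real m + 1)) - 1 / (real m + 1) \<le> cdf (toR (Ms k)) t)" for n m
  have P0: "P n 0" for n
    unfolding P_def
  proof (intro allI impI)
    fix k t
    have "0 \<le> cdf (toR (Ms k)) t" "cdf (toR (Ms k)) t \<le> 1" using Delta_cdf(5,6)[OF Ms] by blast+
    moreover have "0 \<le> G (t + 1)" "G (t - 1) \<le> 1" using Gp(5,6) by blast+
    ultimately show "cdf (toR (Ms k)) t \<le> G (t + 1 / (real 0 + 1)) + 1 / (real 0 + 1)
       \<and> G (t - 1 / (real 0 + 1)) - 1 / (real 0 + 1) \<le> cdf (toR (Ms k)) t" by simp
  qed
  have Pmono: "P n m \<Longrightarrow> P (Suc n) m" for n m unfolding P_def by auto
  have Pev: "\<exists>n0. \<forall>n\<ge>n0. P n m" for m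
  proof -
    have "\<forall>\<^sub>F k in sequentially. \<forall>t. cdf (toR (Ms k)) t \<le> G (t + 1 / (real m + 1)) + 1 / (real m + 1)
       \<and> G (t - 1 / (real m + 1)) - 1 / (real m + 1) \<le> cdf (toR (Ms k)) t"
      unfolding G_def by (rule levy[OF ab Ms M lim]) simp
    then obtain n0 where "\<forall>k\<ge>n0. \<forall>t. cdf (toR (Ms k)) t \<le> G (t + 1 / (real m + 1)) + 1 / (real m + 1)
       \<and> G (t - 1 / (real m + 1)) - 1 / (real m + 1) \<le> cdf (toR (Ms k)) t"
      unfolding eventually_sequentially by blast
    then show ?thesis unfolding P_def by (intro exI[of _ n0]) auto
  qed
  obtain mm where mmP: "\<And>n. P n (mm n)" and mmm: "mono mm" and mmu: "\<And>m. \<exists>n0. \<forall>n\<ge>n0. m \<le> mm n"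
    using greatest_seq[of P, OF P0 Pmono Pev] by blast
  define dd where "dd n = 1 / (real (mm n) + 1)" for n
  have dpos: "0 < dd n" for n unfolding dd_def by simp
  have danti: "dd (Suc n) \<le> dd n" for n
  proof -
    have "mm n \<le> mm (Suc n)" using mmm by (simp add: mono_iff_le_Suc)
    then show ?thesis unfolding dd_def by (intro divide_left_mono) auto
  qed
  have dlim: "dd \<longlonglongrightarrow> 0"
  proof (rule order_tendstoI)
    fix y :: real assume "y < 0" then show "\<forall>\<^sub>F n in sequentially. y < dd n"
      using dpos by (auto intro: always_eventually less_trans)
  next
    fix y :: real assume y: "0 < y"
    obtain m where m: "inverse (real (Suc m)) < y" using reals_Archimedean[OF y] by blast
    obtain n0 where n0: "\<forall>n\<ge>n0. m \<le> mm n" using mmu by blast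
    show "\<forall>\<^sub>F n in sequentially. dd n < y" unfolding eventually_sequentially
    proof (intro exI[of _ n0] allI impI)
      fix n assume "n0 \<le> n"
      then have "m \<le> mm n" using n0 by simp
      then have "dd n \<le> 1 / (real m + 1)" unfolding dd_def by (intro divide_left_mono) auto
      also have "\<dots> < y" using m by (simp add: inverse_eq_divide add.commute)
      finally show "dd n < y" .
    qed
  qed
  have Pd: "\<forall>t. cdf (toR (Ms n)) t \<le> G (t + dd n) + dd n \<and> G (t - dd n) - dd n \<le> cdf (toR (Ms n)) t" for n
    using mmP[of n] unfolding P_def dd_def by auto
  have HLp: "\<And>x y. x \<le> y \<Longrightarrow> Hlo a b G (dd n) x \<le> Hlo a b G (dd n) y"
    "\<And>t. continuous (at_right t) (Hlo a b G (dd n))"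
    "\<And>t. t < a \<Longrightarrow> Hlo a b G (dd n) t = 0"
    "\<And>t. b \<le> t \<Longrightarrow> Hlo a b G (dd n) t = 1" for n
    using Hlo_props[OF ab Gp(1) Gp(5) Gp(6) Gp(3) Gp(4) Gp(2) dpos[of n]] by auto
  have HUp: "\<And>x y. x \<le> y \<Longrightarrow> Hup a b G (dd n) x \<le> Hup a b G (dd n) y"
    "\<And>t. continuous (at_right t) (Hup a b G (dd n))"
    "\<And>t. t < a \<Longrightarrow> Hup a b G (dd n) t = 0"
    "\<And>t. b \<le> t \<Longrightarrow> Hup a b G (dd n) t = 1" for n
    using Hup_props[OF ab Gp(1) Gp(5) Gp(6) Gp(3) Gp(4) Gp(2) dpos[of n]] by auto
  define L where "L n = ofR a b (interval_measure (Hlo a b G (dd n)))" for n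
  define U where "U n = ofR a b (interval_measure (Hup a b G (dd n)))" for n
  have Ld: "L n \<in> Delta a b" and cL: "cdf (toR (L n)) = Hlo a b G (dd n)" for n
    unfolding L_def using mk_Delta[OF ab' HLp(1) HLp(2) HLp(3) HLp(4)] by auto
  have Ud: "U n \<in> Delta a b" and cU: "cdf (toR (U n)) = Hup a b G (dd n)" for n
    unfolding U_def using mk_Delta[OF ab' HUp(1) HUp(2) HUp(3) HUp(4)] by auto
  have HloA: "Hlo a b G d' t \<le> Hlo a b G d t" if "d' \<le> d" for d d' t
    using Hlo_anti[OF ab Gp(1) Gp(5) Gp(6) Gp(3) Gp(4) Gp(2) that] by auto
  have HupA: "Hup a b G d t \<le> Hup a b G d' t" if "d' \<le> d" for d d' t
    using Hup_anti[OF ab Gp(1) Gp(5) Gp(6) Gp(3) Gp(4) Gp(2) that] by auto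
  have f1: "fosd a b (L n) (L (Suc n))" for n
    by (rule fosd_cdf[OF Ld Ld ab']) (simp add: cL HloA danti)
  have f2: "fosd a b (U (Suc n)) (U n)" for n
    by (rule fosd_cdf[OF Ud Ud ab']) (simp add: cU HupA danti)
  have f3: "fosd a b (L n) (Ms n)" for n
  proof (rule fosd_cdf[OF Ld Ms ab'])
    fix t
    have "cdf (toR (Ms n)) t \<le> Hlo a b G (dd n) t"
      unfolding Hlo_def using Pd[of n] Delta_cdf(3)[OF Ms, of t n] Delta_cdf(4)[OF Ms, of t n] Delta_cdf(6)[OF Ms, of n t] by auto
    then show "cdf (toR (Ms n)) t \<le> cdf (toR (L n)) t" by (simp add: cL)
  qed
  have f4: "fosd a b (Ms n) (U n)" for n
  proof (rule fosd_cdf[OF Ms Ud ab'])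
    fix t
    have "Hup a b G (dd n) t \<le> cdf (toR (Ms n)) t"
      unfolding Hup_def using Pd[of n] Delta_cdf(3)[OF Ms, of t n] Delta_cdf(4)[OF Ms, of t n] Delta_cdf(5)[OF Ms, of n t] by auto
    then show "cdf (toR (U n)) t \<le> cdf (toR (Ms n)) t" by (simp add: cU)
  qed
  have l1: "limitin (weak_top a b) L M sequentially"
  proof (rule weak_conv_limitin[OF Ld M ab'])
    show "weak_conv_m (\<lambda>n. toR (L n)) (toR M)"
      unfolding weak_conv_m_def weak_conv_def cL G_def[symmetric]
      using Hlo_conv[OF ab Gp(1) Gp(5) Gp(6) Gp(3) Gp(4) Gp(2) dpos dlim] by auto
  qed
  have l2: "limitin (weak_top a b) U M sequentially"
  proof (rule weak_conv_limitin[OF Ud M ab'])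
    show "weak_conv_m (\<lambda>n. toR (U n)) (toR M)"
      unfolding weak_conv_m_def weak_conv_def cU G_def[symmetric]
      using Hup_conv[OF ab Gp(1) Gp(5) Gp(6) Gp(3) Gp(4) Gp(2) dpos dlim] by auto
  qed
  show ?thesis using Ld Ud f1 f2 f3 f4 l1 l2 by blast
qed



lemma topspace_X: "topspace (Xtop a b S) = (\<Pi>\<^sub>E s\<in>S. Delta a b)"
  unfolding Xtop_def by (simp add: topspace_weak)

lemma limitin_X:
  assumes "x \<in> topspace (Xtop a b S)" "\<And>n. xs n \<in> topspace (Xtop a b S)"
    and "\<And>s. s \<in> S \<Longrightarrow> limitin (weak_top a b) (\<lambda>n. xs n s) (x s) sequentially"
  shows "limitin (Xtop a b S) xs x sequentially"
  unfolding Xtop_def limitin_componentwise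
  using assms unfolding topspace_X[symmetric] by (auto simp: Xtop_def PiE_iff)

lemma Delta_nonempty: assumes ab: "a < b" shows "\<exists>M. M \<in> Delta a b"
proof -
  let ?G = "\<lambda>t::real. if t < a then 0 else if b \<le> t then 1 else (\<lambda>_. 1::real) t"
  have rc: "continuous (at_right t) ?G" for t by (rule piece_rc[OF ab]) simp
  have "ofR a b (interval_measure ?G) \<in> Delta a b"
    by (rule mk_Delta(1)[OF _ _ rc]) (use ab in auto)
  then show ?thesis by blast
qed

theorem mainTheorem11:
  fixes a b :: real and S :: "'i set"
  assumes "finite S" and "S \<noteq> {}" and "a < b"
  shows "squeezing_property a b S \<and>
    (\<exists>Pairs :: nat \<Rightarrow> ('i \<Rightarrow> real measure) set.
        (\<forall>i. \<exists>p q. p \<in> topspace (Xtop a b S) \<and> q \<in> topspace (Xtop a b S) \<and> Pairs i = {p, q})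
      \<and> countable_order_property a b S Pairs)"
proof
  note ab = \<open>a < b\<close>
  show "squeezing_property a b S"
    unfolding squeezing_property_def
  proof (intro allI impI, elim conjE)
    fix x xs assume xsT: "\<forall>n. xs n \<in> topspace (Xtop a b S)" and xT: "x \<in> topspace (Xtop a b S)"
      and lim: "limitin (Xtop a b S) xs x sequentially"
    have xsD: "xs n s \<in> Delta a b" if "s \<in> S" for n s using xsT that by (auto simp: topspace_X)
    have xD: "x s \<in> Delta a b" if "s \<in> S" for s using xT that by (auto simp: topspace_X)
    have limS: "limitin (weak_top a b) (\<lambda>n. xs n s) (x s) sequentially" if "s \<in> S" for s
      using lim that unfolding Xtop_def limitin_componentwise by blast
    have "\<forall>s\<in>S. \<exists>p. (\<forall>n. fst p n \<in> Delta a b \<and> snd p n \<in> Delta a b) \<and> (\<forall>n. fosd a b (fst p n) (fst p (Suc n)))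
     \<and> (\<forall>n. fosd a b (snd p (Suc n)) (snd p n)) \<and> (\<forall>n. fosd a b (fst p n) (xs n s) \<and> fosd a b (xs n s) (snd p n))
     \<and> limitin (weak_top a b) (fst p) (x s) sequentially \<and> limitin (weak_top a b) (snd p) (x s) sequentially"
    proof
      fix s assume s: "s \<in> S"
      from sqz1[OF ab xsD[OF s] xD[OF s] limS[OF s]] obtain L U where
        "(\<forall>n. L n \<in> Delta a b \<and> U n \<in> Delta a b) \<and> (\<forall>n. fosd a b (L n) (L (Suc n)))
     \<and> (\<forall>n. fosd a b (U (Suc n)) (U n)) \<and> (\<forall>n. fosd a b (L n) (xs n s) \<and> fosd a b (xs n s) (U n))
     \<and> limitin (weak_top a b) L (x s) sequentially \<and> limitin (weak_top a b) U (x s) sequentially" by blast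
      then show "\<exists>p. (\<forall>n. fst p n \<in> Delta a b \<and> snd p n \<in> Delta a b) \<and> (\<forall>n. fosd a b (fst p n) (fst p (Suc n)))
     \<and> (\<forall>n. fosd a b (snd p (Suc n)) (snd p n)) \<and> (\<forall>n. fosd a b (fst p n) (xs n s) \<and> fosd a b (xs n s) (snd p n))
     \<and> limitin (weak_top a b) (fst p) (x s) sequentially \<and> limitin (weak_top a b) (snd p) (x s) sequentially"
        by (intro exI[of _ "(L, U)"]) simp
    qed
    from bchoice[OF this] obtain f where f: "\<forall>s\<in>S. (\<forall>n. fst (f s) n \<in> Delta a b \<and> snd (f s) n \<in> Delta a b) \<and> (\<forall>n. fosd a b (fst (f s) n) (fst (f s) (Suc n)))
     \<and> (\<forall>n. fosd a b (snd (f s) (Suc n)) (snd (f s) n)) \<and> (\<forall>n. fosd a b (fst (f s) n) (xs n s) \<and> fosd a b (xs n s) (snd (f s) n))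
     \<and> limitin (weak_top a b) (fst (f s)) (x s) sequentially \<and> limitin (weak_top a b) (snd (f s)) (x s) sequentially"
      by blast
    define xl where "xl n = restrict (\<lambda>s. fst (f s) n) S" for n
    define xu where "xu n = restrict (\<lambda>s. snd (f s) n) S" for n
    note fs = bspec[OF f]
    have T: "xl n \<in> topspace (Xtop a b S) \<and> xu n \<in> topspace (Xtop a b S)" for n
      unfolding topspace_X xl_def xu_def restrict_PiE_iff using fs by blast
    show "\<exists>xl xu. (\<forall>n. xl n \<in> topspace (Xtop a b S) \<and> xu n \<in> topspace (Xtop a b S))
         \<and> (\<forall>n. xle a b S (xl n) (xl (Suc n)))
         \<and> (\<forall>n. xle a b S (xu (Suc n)) (xu n))
         \<and> (\<forall>n. xle a b S (xl n) (xs n) \<and> xle a b S (xs n) (xu n))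
         \<and> limitin (Xtop a b S) xl x sequentially
         \<and> limitin (Xtop a b S) xu x sequentially"
    proof -
      have a1: "xle a b S (xl n) (xl (Suc n))" for n unfolding xle_def xl_def using fs by simp
      have a2: "xle a b S (xu (Suc n)) (xu n)" for n unfolding xle_def xu_def using fs by simp
      have a3: "xle a b S (xl n) (xs n)" for n unfolding xle_def xl_def using fs by simp
      have a4: "xle a b S (xs n) (xu n)" for n unfolding xle_def xu_def using fs by simp
      have a5: "limitin (Xtop a b S) xl x sequentially"
      proof (rule limitin_X[OF xT])
        show "xl n \<in> topspace (Xtop a b S)" for n using T by blast
        fix s assume s: "s \<in> S"
        have "limitin (weak_top a b) (fst (f s)) (x s) sequentially" using fs[OF s] by blast
        moreover have "(\<lambda>n. xl n s) = fst (f s)" using s by (simp add: xl_def)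
        ultimately show "limitin (weak_top a b) (\<lambda>n. xl n s) (x s) sequentially" by simp
      qed
      have a6: "limitin (Xtop a b S) xu x sequentially"
      proof (rule limitin_X[OF xT])
        show "xu n \<in> topspace (Xtop a b S)" for n using T by blast
        fix s assume s: "s \<in> S"
        have "limitin (weak_top a b) (snd (f s)) (x s) sequentially" using fs[OF s] by blast
        moreover have "(\<lambda>n. xu n s) = snd (f s)" using s by (simp add: xu_def)
        ultimately show "limitin (weak_top a b) (\<lambda>n. xu n s) (x s) sequentially" by simp
      qed
      show ?thesis by (rule exI[of _ xl], rule exI[of _ xu], intro conjI allI) (use T a1 a2 a3 a4 a5 a6 in blast)+
    qed
  qed
next
  note ab = \<open>a < b\<close>
  define B where "B = (\<Pi>\<^sub>E s\<in>S. Dset a b \<inter> Delta a b)"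
  have cB: "countable B" unfolding B_def
    by (rule countable_PiE[OF \<open>finite S\<close>]) (rule countable_Int1[OF countable_Dset])
  obtain M0 where M0: "M0 \<in> Delta a b" using Delta_nonempty[OF ab] by blast
  obtain D0 where D0: "D0 \<in> Dset a b \<inter> Delta a b" using cop1[OF ab M0] by blast
  have "restrict (\<lambda>s. D0) S \<in> B" unfolding B_def using D0 by auto
  then have Bne: "B \<noteq> {}" by blast
  have BT: "B \<subseteq> topspace (Xtop a b S)" unfolding B_def topspace_X by auto
  define Pairs where "Pairs i = {from_nat_into B i, from_nat_into B i}" for i
  show "\<exists>Pairs :: nat \<Rightarrow> ('i \<Rightarrow> real measure) set.
        (\<forall>i. \<exists>p q. p \<in> topspace (Xtop a b S) \<and> q \<in> topspace (Xtop a b S) \<and> Pairs i = {p, q})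
      \<and> countable_order_property a b S Pairs"
  proof (intro exI[of _ Pairs] conjI allI)
    fix i show "\<exists>p q. p \<in> topspace (Xtop a b S) \<and> q \<in> topspace (Xtop a b S) \<and> Pairs i = {p, q}"
      using from_nat_into[OF Bne, of i] BT unfolding Pairs_def by blast
  next
    have UP: "B \<subseteq> (\<Union>i. Pairs i)"
    proof
      fix y assume "y \<in> B"
      then obtain i where "y = from_nat_into B i" using range_from_nat_into[OF Bne cB] by blast
      then show "y \<in> (\<Union>i. Pairs i)" unfolding Pairs_def by blast
    qed
    show "countable_order_property a b S Pairs"
      unfolding countable_order_property_def
    proof (intro allI impI, elim conjE)
      fix x V assume xT: "x \<in> topspace (Xtop a b S)" and V: "openin (Xtop a b S) V" and xV: "x \<in> V"
      have xD: "x s \<in> Delta a b" if "s \<in> S" for s using xT that by (auto simp: topspace_X)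
      have "\<forall>s\<in>S. \<exists>p. (\<forall>n. fst p n \<in> Dset a b \<inter> Delta a b \<and> snd p n \<in> Dset a b \<inter> Delta a b)
        \<and> (\<forall>n. fosd a b (fst p n) (x s) \<and> fosd a b (x s) (snd p n))
        \<and> limitin (weak_top a b) (fst p) (x s) sequentially \<and> limitin (weak_top a b) (snd p) (x s) sequentially"
      proof
        fix s assume s: "s \<in> S"
        from cop1[OF ab xD[OF s]] obtain D E where
          "(\<forall>n. D n \<in> Dset a b \<inter> Delta a b \<and> E n \<in> Dset a b \<inter> Delta a b)
          \<and> (\<forall>n. fosd a b (D n) (x s) \<and> fosd a b (x s) (E n))
          \<and> limitin (weak_top a b) D (x s) sequentially \<and> limitin (weak_top a b) E (x s) sequentially" by blast
        then show "\<exists>p. (\<forall>n. fst p n \<in> Dset a b \<inter> Delta a b \<and> snd p n \<in> Dset a b \<inter> Delta a b)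
        \<and> (\<forall>n. fosd a b (fst p n) (x s) \<and> fosd a b (x s) (snd p n))
        \<and> limitin (weak_top a b) (fst p) (x s) sequentially \<and> limitin (weak_top a b) (snd p) (x s) sequentially"
          by (intro exI[of _ "(D, E)"]) simp
      qed
      from bchoice[OF this] obtain f where f: "\<forall>s\<in>S. (\<forall>n. fst (f s) n \<in> Dset a b \<inter> Delta a b \<and> snd (f s) n \<in> Dset a b \<inter> Delta a b)
        \<and> (\<forall>n. fosd a b (fst (f s) n) (x s) \<and> fosd a b (x s) (snd (f s) n))
        \<and> limitin (weak_top a b) (fst (f s)) (x s) sequentially \<and> limitin (weak_top a b) (snd (f s)) (x s) sequentially"
        by blast
      define xl where "xl n = restrict (\<lambda>s. fst (f s) n) S" for n
      define xu where "xu n = restrict (\<lambda>s. snd (f s) n) S" for n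
      note fs = bspec[OF f]
      have inB: "xl n \<in> B \<and> xu n \<in> B" for n
        unfolding B_def xl_def xu_def restrict_PiE_iff using fs by blast
      have T: "xl n \<in> topspace (Xtop a b S) \<and> xu n \<in> topspace (Xtop a b S)" for n
        using inB BT by blast
      have l1: "limitin (Xtop a b S) xl x sequentially"
      proof (rule limitin_X[OF xT])
        show "xl n \<in> topspace (Xtop a b S)" for n using T by blast
        fix s assume s: "s \<in> S"
        have "limitin (weak_top a b) (fst (f s)) (x s) sequentially" using fs[OF s] by blast
        moreover have "(\<lambda>n. xl n s) = fst (f s)" using s by (simp add: xl_def)
        ultimately show "limitin (weak_top a b) (\<lambda>n. xl n s) (x s) sequentially" by simp
      qed
      have l2: "limitin (Xtop a b S) xu x sequentially"
      proof (rule limitin_X[OF xT])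
        show "xu n \<in> topspace (Xtop a b S)" for n using T by blast
        fix s assume s: "s \<in> S"
        have "limitin (weak_top a b) (snd (f s)) (x s) sequentially" using fs[OF s] by blast
        moreover have "(\<lambda>n. xu n s) = snd (f s)" using s by (simp add: xu_def)
        ultimately show "limitin (weak_top a b) (\<lambda>n. xu n s) (x s) sequentially" by simp
      qed
      have e1: "\<forall>\<^sub>F n in sequentially. xl n \<in> V" using l1 V xV unfolding limitin_def by blast
      have e2: "\<forall>\<^sub>F n in sequentially. xu n \<in> V" using l2 V xV unfolding limitin_def by blast
      have "\<forall>\<^sub>F n in sequentially. xl n \<in> V \<and> xu n \<in> V" by (rule eventually_conj[OF e1 e2])
      then obtain N0 where "\<forall>n\<ge>N0. xl n \<in> V \<and> xu n \<in> V" unfolding eventually_sequentially by blast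
      then have n: "xl N0 \<in> V" "xu N0 \<in> V" by auto
      define n where "n = N0"
      note n = n[folded n_def]
      show "\<exists>x' x''. x' \<in> (\<Union>i. Pairs i) \<inter> V \<and> x'' \<in> (\<Union>i. Pairs i) \<inter> V \<and> xle a b S x' x \<and> xle a b S x x''"
      proof (rule exI[of _ "xl n"], rule exI[of _ "xu n"], intro conjI)
        show "xl n \<in> (\<Union>i. Pairs i) \<inter> V" using inB UP n by blast
        show "xu n \<in> (\<Union>i. Pairs i) \<inter> V" using inB UP n by blast
        show "xle a b S (xl n) x" unfolding xle_def xl_def using fs by simp
        show "xle a b S x (xu n)" unfolding xle_def xu_def using fs by simp
      qed
    qed
  qed
qed


end
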